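(* For $A\in\mathbb{R}$ and $x\in\mathbb{R}$ define $E_0(A,x):=1$, $E_1(A,x):=e^{(1-x)A}$ and, for $n\ge2$, \[ E_n(A,x):=\begin{cases} \exp\!\Big(\big[x(E_1+E_3+\cdots+E_{n-1})-\tfrac n2\big]A\Big), & n \text{ even},\\[4pt] \exp\!\Big(\big[\tfrac{n+1}{2}-x(E_0+E_2+\cdots+E_{n-1})\big]A\Big), & n\text{ odd},\end{cases} \] where all $E_j$ are evaluated at $(A,x)$. Define $\varphi_1(A,x):=x-1$ and $\varphi_n(A,x):=\varphi_{n-1}(A,x)-1+xE_{n-1}(A,x)$ for $n\ge2$, and $p_n(A):=\frac{\partial\varphi_n}{\partial x}(A,1)$. Then for every $n\ge1$, $p_n$ is a polynomial in $A$ with integer coefficients, i.e. $p_n\in\mathbb{Z}[A]$. *)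

theory Defs
  imports "HOL-Analysis.Analysis" "HOL-Computational_Algebra.Polynomial"
begin

fun E :: "nat \<Rightarrow> real \<Rightarrow> real \<Rightarrow> real" where
  "E n A x =
    (if n = 0 then 1
     else if n = 1 then exp ((1 - x) * A)
     else if even n then
       exp ((x * (\<Sum>j\<in>{j. j < n \<and> odd j}. E j A x) - real n / 2) * A)
     else
       exp ((real (n + 1) / 2 - x * (\<Sum>j\<in>{j. j < n \<and> even j}. E j A x)) * A))"

declare E.simps [simp del]

text \<open>phi 1 = x - 1, phi n = phi (n-1) - 1 + x E_{n-1} for n \<ge> 2 (phi 0 is an unused dummy).\<close>
fun phi :: "nat \<Rightarrow> real \<Rightarrow> real \<Rightarrow> real" where
  "phi 0 A x = 0"
| "phi (Suc 0) A x = x - 1"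
| "phi (Suc (Suc n)) A x = phi (Suc n) A x - 1 + x * E (Suc n) A x"

definition p :: "nat \<Rightarrow> real \<Rightarrow> real" where
  "p n A = deriv (\<lambda>x. phi n A x) 1"

end

theory Submission
  imports Defs
begin

definition intpoly :: "(real \<Rightarrow> real) \<Rightarrow> bool" where
  "intpoly f \<longleftrightarrow> (\<exists>q::real poly. (\<forall>i. coeff q i \<in> \<int>) \<and> (\<forall>A. f A = poly q A))"

lemma intpoly_const: "c \<in> \<int> \<Longrightarrow> intpoly (\<lambda>_. c)"
  unfolding intpoly_def by (rule exI[of _ "[:c:]"]) (auto simp: coeff_pCons split: nat.split)

lemma intpoly_id: "intpoly (\<lambda>A. A)"
  unfolding intpoly_def by (rule exI[of _ "[:0,1:]"]) (auto simp: coeff_pCons split: nat.split)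

lemma intpoly_add: "intpoly f \<Longrightarrow> intpoly g \<Longrightarrow> intpoly (\<lambda>A. f A + g A)"
  unfolding intpoly_def
  apply (elim exE conjE)
  subgoal for q1 q2 by (rule exI[of _ "q1 + q2"]) auto
  done

lemma intpoly_mult: "intpoly f \<Longrightarrow> intpoly g \<Longrightarrow> intpoly (\<lambda>A. f A * g A)"
  unfolding intpoly_def
  apply (elim exE conjE)
  subgoal for q1 q2 by (rule exI[of _ "q1 * q2"]) (auto simp: coeff_mult intro!: Ints_sum Ints_mult)
  done

lemma intpoly_sum: "finite S \<Longrightarrow> (\<And>j. j \<in> S \<Longrightarrow> intpoly (f j)) \<Longrightarrow> intpoly (\<lambda>A. \<Sum>j\<in>S. f j A)"
proof (induction S rule: finite_induct)
  case empty
  then show ?case using intpoly_const[of 0] by simp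
next
  case (insert x F)
  then show ?case using intpoly_add[of "f x" "\<lambda>A. \<Sum>j\<in>F. f j A"] by simp
qed

lemma card_odd: "card {j. j < n \<and> odd j} = n div 2"
proof (induction n)
  case 0 then show ?case by simp
next
  case (Suc n)
  have "{j. j < Suc n \<and> odd j} = (if odd n then insert n {j. j < n \<and> odd j} else {j. j < n \<and> odd j})"
    by (auto simp: less_Suc_eq)
  then show ?case using Suc by auto
qed

lemma card_even: "card {j. j < n \<and> even j} = (n + 1) div 2"
proof (induction n)
  case 0 then show ?case by simp
next
  case (Suc n)
  have "{j. j < Suc n \<and> even j} = (if even n then insert n {j. j < n \<and> even j} else {j. j < n \<and> even j})"
    by (auto simp: less_Suc_eq)
  then show ?case using Suc by auto
qed

lemma E_main: "\<exists>d. intpoly d \<and> (\<forall>A. E n A 1 = 1 \<and> ((\<lambda>x. E n A x) has_real_derivative d A) (at 1))"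
proof (induction n rule: less_induct)
  case (less n)
  have "\<forall>j. \<exists>d. j < n \<longrightarrow> intpoly d \<and> (\<forall>A. E j A 1 = 1 \<and> ((\<lambda>x. E j A x) has_real_derivative d A) (at 1))"
    using less by blast
  then obtain D where D: "\<And>j. j < n \<Longrightarrow> intpoly (D j) \<and> (\<forall>A. E j A 1 = 1 \<and> ((\<lambda>x. E j A x) has_real_derivative D j A) (at 1))"
    by metis
  consider "n = 0" | "n = 1" | "n \<ge> 2" "even n" | "n \<ge> 2" "odd n" by fastforce
  then show ?case
  proof cases
    case 1
    then show ?thesis using intpoly_const[of 0] by (auto simp: E.simps)
  next
    case 2
    have "\<forall>A. E n A 1 = 1 \<and> ((\<lambda>x. E n A x) has_real_derivative (- 1) * A) (at 1)"
    proof
      fix A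
      have "((\<lambda>x. exp ((1 - x) * A)) has_real_derivative exp ((1 - 1) * A) * ((0 - 1) * A)) (at 1)"
        by (auto intro!: derivative_eq_intros)
      then show "E n A 1 = 1 \<and> ((\<lambda>x. E n A x) has_real_derivative (- 1) * A) (at 1)"
        using 2 by (simp add: E.simps)
    qed
    moreover have "intpoly (\<lambda>A. (-1) * A)"
      by (intro intpoly_mult intpoly_const intpoly_id) simp
    ultimately show ?thesis by blast
  next
    case 3
    define S where "S = {j. j < n \<and> odd j}"
    have fS: "finite S" unfolding S_def by simp
    have cS: "card S = n div 2" unfolding S_def by (rule card_odd)
    have "\<forall>A. E n A 1 = 1 \<and> ((\<lambda>x. E n A x) has_real_derivative ((\<Sum>j\<in>S. D j A) + real (n div 2)) * A) (at 1)"
    proof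
      fix A
      have eq: "(\<lambda>x. E n A x) = (\<lambda>x. exp ((x * (\<Sum>j\<in>S. E j A x) - real n / 2) * A))"
        using 3 unfolding S_def by (intro ext) (subst E.simps, simp)
      have s1: "(\<Sum>j\<in>S. E j A 1) = real (n div 2)"
        using D cS unfolding S_def by simp
      have hn: "real n / 2 = real (n div 2)" using 3 by (auto elim!: evenE)
      have sd: "((\<lambda>x. \<Sum>j\<in>S. E j A x) has_real_derivative (\<Sum>j\<in>S. D j A)) (at 1)"
        by (rule DERIV_sum) (use D in \<open>auto simp: S_def\<close>)
      have "((\<lambda>x. exp ((x * (\<Sum>j\<in>S. E j A x) - real n / 2) * A)) has_real_derivative
          exp ((1 * (\<Sum>j\<in>S. E j A 1) - real n / 2) * A) * (((1 * (\<Sum>j\<in>S. D j A) + 1 * (\<Sum>j\<in>S. E j A 1)) - 0) * A)) (at 1)"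
        using D by (auto intro!: derivative_eq_intros simp: algebra_simps S_def)
      then show "E n A 1 = 1 \<and> ((\<lambda>x. E n A x) has_real_derivative ((\<Sum>j\<in>S. D j A) + real (n div 2)) * A) (at 1)"
        unfolding eq using s1 hn by (simp add: add.commute)
    qed
    moreover have "intpoly (\<lambda>A. ((\<Sum>j\<in>S. D j A) + real (n div 2)) * A)"
      by (intro intpoly_mult intpoly_add intpoly_const intpoly_id intpoly_sum fS)
         (use D in \<open>auto simp: S_def\<close>)
    ultimately show ?thesis by blast
  next
    case 4
    define S where "S = {j. j < n \<and> even j}"
    have fS: "finite S" unfolding S_def by simp
    have cS: "card S = (n + 1) div 2" unfolding S_def by (rule card_even)
    have "\<forall>A. E n A 1 = 1 \<and> ((\<lambda>x. E n A x) has_real_derivative (-((\<Sum>j\<in>S. D j A) + real ((n + 1) div 2))) * A) (at 1)"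
    proof
      fix A
      have eq: "(\<lambda>x. E n A x) = (\<lambda>x. exp ((real (n + 1) / 2 - x * (\<Sum>j\<in>S. E j A x)) * A))"
        using 4 unfolding S_def by (intro ext) (subst E.simps, simp)
      have s1: "(\<Sum>j\<in>S. E j A 1) = real ((n + 1) div 2)"
        using D cS unfolding S_def by simp
      have hn: "real (n + 1) / 2 = real ((n + 1) div 2)" using 4
        by (metis even_Suc Suc_eq_plus1 evenE nonzero_mult_div_cancel_left of_nat_mult of_nat_numeral zero_neq_numeral real_of_nat_div)
      have sd: "((\<lambda>x. \<Sum>j\<in>S. E j A x) has_real_derivative (\<Sum>j\<in>S. D j A)) (at 1)"
        by (rule DERIV_sum) (use D in \<open>auto simp: S_def\<close>)
      have "((\<lambda>x. exp ((real (n + 1) / 2 - x * (\<Sum>j\<in>S. E j A x)) * A)) has_real_derivative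
          exp ((real (n + 1) / 2 - 1 * (\<Sum>j\<in>S. E j A 1)) * A) * ((0 - (1 * (\<Sum>j\<in>S. D j A) + 1 * (\<Sum>j\<in>S. E j A 1))) * A)) (at 1)"
        using D by (auto intro!: derivative_eq_intros simp: algebra_simps S_def)
      then show "E n A 1 = 1 \<and> ((\<lambda>x. E n A x) has_real_derivative (-((\<Sum>j\<in>S. D j A) + real ((n + 1) div 2))) * A) (at 1)"
        unfolding eq using s1 hn by simp
    qed
    moreover have "intpoly (\<lambda>A. (-((\<Sum>j\<in>S. D j A) + real ((n + 1) div 2))) * A)"
      using intpoly_mult[OF intpoly_const[of "-1"] intpoly_add[OF intpoly_sum[OF fS, of D] intpoly_const[of "real ((n + 1) div 2)"]]]
      by (intro intpoly_mult[OF _ intpoly_id]) (use D in \<open>auto simp: S_def\<close>)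
    ultimately show ?thesis by blast
  qed
qed

lemma phi_main: "\<exists>d. intpoly d \<and> (\<forall>A. ((\<lambda>x. phi (Suc m) A x) has_real_derivative d A) (at 1))"
proof (induction m)
  case 0
  have "\<forall>A. ((\<lambda>x. phi (Suc 0) A x) has_real_derivative 1) (at 1)"
    by (auto intro!: derivative_eq_intros)
  then show ?case using intpoly_const[of 1] by auto
next
  case (Suc m)
  then obtain d where d: "intpoly d" "\<And>A. ((\<lambda>x. phi (Suc m) A x) has_real_derivative d A) (at 1)" by blast
  obtain D where D: "intpoly D" "\<And>A. E (Suc m) A 1 = 1" "\<And>A. ((\<lambda>x. E (Suc m) A x) has_real_derivative D A) (at 1)"
    using E_main by blast
  have "\<forall>A. ((\<lambda>x. phi (Suc (Suc m)) A x) has_real_derivative d A + (1 + D A)) (at 1)"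
    using d D by (auto intro!: derivative_eq_intros)
  moreover have "intpoly (\<lambda>A. d A + (1 + D A))"
    by (intro intpoly_add intpoly_const d D) simp
  ultimately show ?case by blast
qed

theorem lemma4p1:
  fixes n :: nat
  assumes "n \<ge> 1"
  shows "\<exists>q :: int poly. \<forall>A. p n A = poly (map_poly of_int q) A"
proof -
  obtain m where m: "n = Suc m" using assms by (cases n) auto
  obtain d where d: "intpoly d" "\<And>A. ((\<lambda>x. phi n A x) has_real_derivative d A) (at 1)"
    using phi_main[of m] m by blast
  obtain q :: "real poly" where q: "\<And>i. coeff q i \<in> \<int>" "\<And>A. d A = poly q A"
    using d(1) unfolding intpoly_def by blast
  have "map_poly (of_int :: int \<Rightarrow> real) (map_poly floor q) = map_poly (\<lambda>x. of_int (floor x)) q"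
    by (simp add: map_poly_map_poly o_def)
  also have "\<dots> = q"
  proof (rule map_poly_idI)
    fix x assume "x \<in> set (coeffs q)"
    then obtain i where "x = coeff q i" by (auto simp: coeffs_def split: if_splits)
    then have "x \<in> \<int>" using q by simp
    then show "real_of_int \<lfloor>x\<rfloor> = x" by (auto elim: Ints_cases)
  qed
  finally have eq: "map_poly (of_int :: int \<Rightarrow> real) (map_poly floor q) = q" .
  show ?thesis
  proof (intro exI allI)
    fix A
    have "p n A = d A" unfolding p_def using d(2) by (rule DERIV_imp_deriv)
    then show "p n A = poly (map_poly of_int (map_poly floor q)) A" using eq q by simp
  qed
qed

end
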